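(* Let $(G,X,\Gamma)$ be a $(\mu,\nu)$-path system group containing a $\delta$-constricting element $(g,A)$ with $\delta$-constricting map $\pi_A$, and let $\pi_{uA}$ ($u\in G$) be the translated maps described in the context. For every $\eta\ge0$ there exists $\theta\ge1$ such that for every $\eta$-quasi-convex subgroup $(H,Y)$ of $G$: (I) for every $u\in G$, if $\operatorname{diam}_{uA}(Y)>\theta$ then $uA\subseteq Y^{+\theta}$; (II) for every subgroup $K$ with $H\le K\le G$, if $[K:H]>\theta$ then there exists $k\in K$ with $\operatorname{diam}_{kA}(Y)\le\theta$.
   Context: A path is a rectifiable continuous map $\alpha\colon[a,b]\to X$ parametrised by arc length; it is a $(\kappa,\lambda)$-quasi-geodesic if $d(\alpha(t),\alpha(t'))\le|t-t'|\le\kappa d(\alpha(t),\alpha(t'))+\lambda$. A $(\mu,\nu)$-path system group $(G,X,\Gamma)$ is a group $G$ acting properly by isometries on a geodesic metric space $X$ together with a $G$-invariant collection $\Gamma$ of paths closed under subpaths, such that any two points are joined by an element of $\Gamma$ and every element is a $(\mu,\nu)$-quasi-geodesic. $Y^{+\eta}=\{x: d(x,Y)\le\eta\}$. A subset $Y$ is $\eta$-quasi-convex if every $\gamma\in\Gamma$ with endpoints in $Y$ lies in $Y^{+\eta}$; a subgroup $H$ is $\eta$-quasi-convex, written $(H,Y)$, if $Y$ is $H$-invariant, $\eta$-quasi-convex, and $H$ acts on $Y$ $\eta$-coboundedly (for all $y,y'\in Y$ some $h\in H$ has $d(y,hy')\le\eta$). A map $\pi_A\colon X\to A$ is $\delta$-constricting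 if (CS1) $d(x,\pi_A(x))\le\delta$ for $x\in A$, and (CS2) for all $x,y\in X$ and $\gamma\in\Gamma$ joining them, if $d(\pi_A(x),\pi_A(y))>\delta$ then $\gamma$ meets $B_X(\pi_A(x),\delta)$ and $B_X(\pi_A(y),\delta)$. An element $g$ is $\delta$-constricting, written $(g,A)$, if it has infinite order and $A$ is a $\langle g\rangle$-invariant subset admitting a $\delta$-constricting map $\pi_A$, on which $\langle g\rangle$ acts $\delta$-coboundedly. Translated maps: fix a set $R$ of representatives of $G/\mathrm{Stab}(A)$; for $u\in G$ let $u_0\in R$ with $uA=u_0A$ and set $\pi_{uA}(x)=u_0\pi_A(u_0^{-1}x)$ (a $\delta$-constricting map onto $uA$). $\operatorname{diam}_{uA}(Y)=\operatorname{diam}(\pi_{uA}(Y))$. *)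

theory Defs
  imports "HOL-Analysis.Analysis" "HOL-Algebra.Group_Action"
begin

text \<open>A path is a triple (a, b, alpha) with alpha defined on [a,b].\<close>
type_synonym 'x path = "real \<times> real \<times> (real \<Rightarrow> 'x)"

definition geodesic_space :: "'x::metric_space itself \<Rightarrow> bool" where
  "geodesic_space _ \<longleftrightarrow> (\<forall>x y::'x. \<exists>\<gamma>::real \<Rightarrow> 'x. \<gamma> 0 = x \<and> \<gamma> (dist x y) = y \<and>
      (\<forall>s\<in>{0..dist x y}. \<forall>t\<in>{0..dist x y}. dist (\<gamma> s) (\<gamma> t) = \<bar>s - t\<bar>))"

definition curve_length :: "(real \<Rightarrow> 'x::metric_space) \<Rightarrow> real \<Rightarrow> real \<Rightarrow> ereal" where
  "curve_length \<alpha> s t = (SUP np \<in> {(n, p). p 0 = s \<and> p n = t \<and> (\<forall>i<n. p i \<le> p (Suc i))}.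
      ereal (\<Sum>i<fst np. dist (\<alpha> (snd np i)) (\<alpha> (snd np (Suc i)))))"

definition arc_length_path :: "'x::metric_space path \<Rightarrow> bool" where
  "arc_length_path p \<longleftrightarrow> (case p of (a, b, \<alpha>) \<Rightarrow> a \<le> b \<and> continuous_on {a..b} \<alpha> \<and>
      (\<forall>s t. a \<le> s \<longrightarrow> s \<le> t \<longrightarrow> t \<le> b \<longrightarrow> curve_length \<alpha> s t = ereal (t - s)))"

definition quasi_geodesic :: "real \<Rightarrow> real \<Rightarrow> 'x::metric_space path \<Rightarrow> bool" where
  "quasi_geodesic \<kappa> lam p \<longleftrightarrow> arc_length_path p \<and> (case p of (a, b, \<alpha>) \<Rightarrow>
      (\<forall>t\<in>{a..b}. \<forall>t'\<in>{a..b}. dist (\<alpha> t) (\<alpha> t') \<le> \<bar>t - t'\<bar> \<and>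
          \<bar>t - t'\<bar> \<le> \<kappa> * dist (\<alpha> t) (\<alpha> t') + lam))"

definition path_image_of :: "'x path \<Rightarrow> 'x set" where
  "path_image_of p = (case p of (a, b, \<alpha>) \<Rightarrow> \<alpha> ` {a..b})"

definition joins :: "'x path \<Rightarrow> 'x \<Rightarrow> 'x \<Rightarrow> bool" where
  "joins p x y \<longleftrightarrow> (case p of (a, b, \<alpha>) \<Rightarrow> \<alpha> a = x \<and> \<alpha> b = y)"

definition proper_action :: "('g, 'b) monoid_scheme \<Rightarrow> ('g \<Rightarrow> 'x::metric_space \<Rightarrow> 'x) \<Rightarrow> bool" where
  "proper_action G \<phi> \<longleftrightarrow> (\<forall>x r. finite {g \<in> carrier G. dist x (\<phi> g x) \<le> r})"

definition path_system_group ::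
  "('g, 'b) monoid_scheme \<Rightarrow> ('g \<Rightarrow> 'x::metric_space \<Rightarrow> 'x) \<Rightarrow> 'x path set \<Rightarrow> real \<Rightarrow> real \<Rightarrow> bool" where
  "path_system_group G \<phi> \<Gamma> \<mu> \<nu> \<longleftrightarrow>
     group G \<and> group_action G UNIV \<phi> \<and>
     (\<forall>g\<in>carrier G. \<forall>x y. dist (\<phi> g x) (\<phi> g y) = dist x y) \<and>
     proper_action G \<phi> \<and> geodesic_space TYPE('x) \<and>
     (\<forall>g\<in>carrier G. \<forall>a b \<alpha>. (a, b, \<alpha>) \<in> \<Gamma> \<longrightarrow> (a, b, \<phi> g \<circ> \<alpha>) \<in> \<Gamma>) \<and>
     (\<forall>a b \<alpha> a' b'. (a, b, \<alpha>) \<in> \<Gamma> \<longrightarrow> a \<le> a' \<longrightarrow> a' \<le> b' \<longrightarrow> b' \<le> b \<longrightarrow> (a', b', \<alpha>) \<in> \<Gamma>) \<and>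
     (\<forall>x y. \<exists>p\<in>\<Gamma>. joins p x y) \<and>
     (\<forall>p\<in>\<Gamma>. quasi_geodesic \<mu> \<nu> p)"

text \<open>Closed eta-neighbourhood Y^{+eta} = {x. d(x,Y) <= eta} (empty if Y is empty).\<close>
definition nbhd :: "'x::metric_space set \<Rightarrow> real \<Rightarrow> 'x set" where
  "nbhd Y \<eta> = {x. Y \<noteq> {} \<and> infdist x Y \<le> \<eta>}"

definition quasi_convex :: "'x::metric_space path set \<Rightarrow> real \<Rightarrow> 'x set \<Rightarrow> bool" where
  "quasi_convex \<Gamma> \<eta> Y \<longleftrightarrow>
     (\<forall>p\<in>\<Gamma>. \<forall>x\<in>Y. \<forall>y\<in>Y. joins p x y \<longrightarrow> path_image_of p \<subseteq> nbhd Y \<eta>)"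

definition quasi_convex_subgroup ::
  "('g, 'b) monoid_scheme \<Rightarrow> ('g \<Rightarrow> 'x::metric_space \<Rightarrow> 'x) \<Rightarrow> 'x path set \<Rightarrow> real \<Rightarrow> 'g set \<Rightarrow> 'x set \<Rightarrow> bool" where
  "quasi_convex_subgroup G \<phi> \<Gamma> \<eta> H Y \<longleftrightarrow>
     subgroup H G \<and> (\<forall>h\<in>H. \<phi> h ` Y \<subseteq> Y) \<and> quasi_convex \<Gamma> \<eta> Y \<and>
     (\<forall>y\<in>Y. \<forall>y'\<in>Y. \<exists>h\<in>H. dist y (\<phi> h y') \<le> \<eta>)"

definition constricting_map :: "'x::metric_space path set \<Rightarrow> real \<Rightarrow> 'x set \<Rightarrow> ('x \<Rightarrow> 'x) \<Rightarrow> bool" where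
  "constricting_map \<Gamma> \<delta> A \<pi> \<longleftrightarrow>
     (\<forall>x. \<pi> x \<in> A) \<and>
     (\<forall>x\<in>A. dist x (\<pi> x) \<le> \<delta>) \<and>
     (\<forall>x y. \<forall>p\<in>\<Gamma>. joins p x y \<longrightarrow> dist (\<pi> x) (\<pi> y) > \<delta> \<longrightarrow>
        path_image_of p \<inter> cball (\<pi> x) \<delta> \<noteq> {} \<and> path_image_of p \<inter> cball (\<pi> y) \<delta> \<noteq> {})"

definition constricting_element ::
  "('g, 'b) monoid_scheme \<Rightarrow> ('g \<Rightarrow> 'x::metric_space \<Rightarrow> 'x) \<Rightarrow> 'x path set \<Rightarrow> real \<Rightarrow> 'g \<Rightarrow> 'x set \<Rightarrow> ('x \<Rightarrow> 'x) \<Rightarrow> bool" where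
  "constricting_element G \<phi> \<Gamma> \<delta> g A \<pi> \<longleftrightarrow>
     g \<in> carrier G \<and> (\<forall>n::nat. n > 0 \<longrightarrow> g [^]\<^bsub>G\<^esub> n \<noteq> \<one>\<^bsub>G\<^esub>) \<and>
     (\<forall>n::int. \<phi> (g [^]\<^bsub>G\<^esub> n) ` A \<subseteq> A) \<and>
     constricting_map \<Gamma> \<delta> A \<pi> \<and>
     (\<forall>a\<in>A. \<forall>a'\<in>A. \<exists>n::int. dist a (\<phi> (g [^]\<^bsub>G\<^esub> n) a') \<le> \<delta>)"

definition stabiliser :: "('g, 'b) monoid_scheme \<Rightarrow> ('g \<Rightarrow> 'x \<Rightarrow> 'x) \<Rightarrow> 'x set \<Rightarrow> 'g set" where
  "stabiliser G \<phi> A = {g \<in> carrier G. \<phi> g ` A = A}"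

definition coset_representatives ::
  "('g, 'b) monoid_scheme \<Rightarrow> ('g \<Rightarrow> 'x \<Rightarrow> 'x) \<Rightarrow> 'x set \<Rightarrow> 'g set \<Rightarrow> bool" where
  "coset_representatives G \<phi> A R \<longleftrightarrow> R \<subseteq> carrier G \<and>
     (\<forall>u\<in>carrier G. \<exists>!u0. u0 \<in> R \<and> u0 \<in> l_coset G u (stabiliser G \<phi> A))"

definition translated_map ::
  "('g, 'b) monoid_scheme \<Rightarrow> ('g \<Rightarrow> 'x \<Rightarrow> 'x) \<Rightarrow> 'x set \<Rightarrow> ('x \<Rightarrow> 'x) \<Rightarrow> 'g set \<Rightarrow> 'g \<Rightarrow> 'x \<Rightarrow> 'x" where
  "translated_map G \<phi> A \<pi> R u x =
     (let u0 = (THE u0. u0 \<in> R \<and> \<phi> u0 ` A = \<phi> u ` A) in \<phi> u0 (\<pi> (\<phi> (inv\<^bsub>G\<^esub> u0) x)))"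

definition ediam :: "'x::metric_space set \<Rightarrow> ereal" where
  "ediam S = (SUP xy \<in> S \<times> S. ereal (dist (fst xy) (snd xy)))"

definition diam_proj ::
  "('g, 'b) monoid_scheme \<Rightarrow> ('g \<Rightarrow> 'x::metric_space \<Rightarrow> 'x) \<Rightarrow> 'x set \<Rightarrow> ('x \<Rightarrow> 'x) \<Rightarrow> 'g set \<Rightarrow> 'g \<Rightarrow> 'x set \<Rightarrow> ereal" where
  "diam_proj G \<phi> A \<pi> R u Y = ediam (translated_map G \<phi> A \<pi> R u ` Y)"

definition subgroup_index :: "('g, 'b) monoid_scheme \<Rightarrow> 'g set \<Rightarrow> 'g set \<Rightarrow> enat" where
  "subgroup_index G K H = (let C = {r_coset G H k | k. k \<in> K} in if finite C then enat (card C) else \<infinity>)"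

end

theory Submission
  imports Defs
begin


lemma infdist_lessE:
  assumes "Y \<noteq> {}" "infdist x Y < r" obtains y where "y \<in> Y" "dist x y < r"
proof -
  have "(INF a\<in>Y. dist x a) < r" using assms infdist_notempty by metis
  then have "\<exists>a\<in>Y. dist x a < r"
    using assms(1) by (subst (asm) cINF_less_iff) (auto intro: bdd_belowI[where m=0])
  then show ?thesis using that by blast
qed

lemma infdist_iso:
  assumes "\<And>x y. dist (f x) (f y) = dist x y"
  shows "infdist (f x) (f ` Y) = infdist x Y"
  unfolding infdist_def by (simp add: image_image assms)

locale PS =
  fixes G :: "('g, 'b) monoid_scheme" (structure) and \<phi> :: "'g \<Rightarrow> 'x::metric_space \<Rightarrow> 'x"
    and \<Gamma> :: "'x path set" and \<mu> \<nu> \<delta> :: real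
    and g :: 'g and A :: "'x set" and \<pi> :: "'x \<Rightarrow> 'x"
  assumes psg: "path_system_group G \<phi> \<Gamma> \<mu> \<nu>"
    and ce: "constricting_element G \<phi> \<Gamma> \<delta> g A \<pi>"
begin

lemma grp: "group G" using psg unfolding path_system_group_def by blast
lemma gact: "group_action G UNIV \<phi>" using psg unfolding path_system_group_def by blast

sublocale group G by (rule grp)

lemma act_mult: "a \<in> carrier G \<Longrightarrow> b \<in> carrier G \<Longrightarrow> \<phi> (a \<otimes> b) x = \<phi> a (\<phi> b x)"
  using group_action.composition_rule[OF gact] by blast

lemma act_one: "\<phi> \<one> x = x"
  using group_action.id_eq_one[OF gact] by (metis UNIV_I restrict_apply)

lemma act_inv1: "a \<in> carrier G \<Longrightarrow> \<phi> (inv a) (\<phi> a x) = x"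
  by (metis act_mult act_one inv_closed l_inv)
lemma act_inv2: "a \<in> carrier G \<Longrightarrow> \<phi> a (\<phi> (inv a) x) = x"
  by (metis act_mult act_one inv_closed r_inv)

lemma iso: "a \<in> carrier G \<Longrightarrow> dist (\<phi> a x) (\<phi> a y) = dist x y"
  using psg unfolding path_system_group_def by blast

lemma proper: "finite {f \<in> carrier G. dist x (\<phi> f x) \<le> r}"
  using psg unfolding path_system_group_def proper_action_def by blast

definition mu where "mu = max \<mu> 1"
definition nu where "nu = max \<nu> 0"

lemma mu_ge1: "mu \<ge> 1" unfolding mu_def by simp
lemma nu_ge0: "nu \<ge> 0" unfolding nu_def by simp

lemma qgp: "p \<in> \<Gamma> \<Longrightarrow> quasi_geodesic \<mu> \<nu> p"
  using psg unfolding path_system_group_def by blast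

lemma ab: "(a, b, \<alpha>) \<in> \<Gamma> \<Longrightarrow> a \<le> b"
proof -
  assume "(a, b, \<alpha>) \<in> \<Gamma>"
  then have "arc_length_path (a, b, \<alpha>)" using qgp unfolding quasi_geodesic_def by blast
  then show ?thesis unfolding arc_length_path_def by simp
qed

lemma qg0: "(a, b, \<alpha>) \<in> \<Gamma> \<Longrightarrow> t \<in> {a..b} \<Longrightarrow> t' \<in> {a..b} \<Longrightarrow>
   dist (\<alpha> t) (\<alpha> t') \<le> \<bar>t - t'\<bar> \<and> \<bar>t - t'\<bar> \<le> \<mu> * dist (\<alpha> t) (\<alpha> t') + \<nu>"
proof -
  assume h: "(a, b, \<alpha>) \<in> \<Gamma>" "t \<in> {a..b}" "t' \<in> {a..b}"
  then have "quasi_geodesic \<mu> \<nu> (a, b, \<alpha>)" using qgp by blast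
  then have "\<forall>t\<in>{a..b}. \<forall>t'\<in>{a..b}. dist (\<alpha> t) (\<alpha> t') \<le> \<bar>t - t'\<bar> \<and>
          \<bar>t - t'\<bar> \<le> \<mu> * dist (\<alpha> t) (\<alpha> t') + \<nu>" unfolding quasi_geodesic_def by simp
  then show ?thesis using h(2,3) by blast
qed

lemma qg1: "(a, b, \<alpha>) \<in> \<Gamma> \<Longrightarrow> t \<in> {a..b} \<Longrightarrow> t' \<in> {a..b} \<Longrightarrow> dist (\<alpha> t) (\<alpha> t') \<le> \<bar>t - t'\<bar>"
  using qg0 by blast

lemma qg2: "(a, b, \<alpha>) \<in> \<Gamma> \<Longrightarrow> t \<in> {a..b} \<Longrightarrow> t' \<in> {a..b} \<Longrightarrow> \<bar>t - t'\<bar> \<le> mu * dist (\<alpha> t) (\<alpha> t') + nu"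
proof -
  assume h: "(a, b, \<alpha>) \<in> \<Gamma>" "t \<in> {a..b}" "t' \<in> {a..b}"
  then have "\<bar>t - t'\<bar> \<le> \<mu> * dist (\<alpha> t) (\<alpha> t') + \<nu>"
    using qg0 by blast
  moreover have "\<mu> * dist (\<alpha> t) (\<alpha> t') \<le> mu * dist (\<alpha> t) (\<alpha> t')"
    unfolding mu_def by (intro mult_right_mono) auto
  ultimately show ?thesis unfolding nu_def by linarith
qed

lemma sub: "(a, b, \<alpha>) \<in> \<Gamma> \<Longrightarrow> a \<le> s \<Longrightarrow> s \<le> t \<Longrightarrow> t \<le> b \<Longrightarrow> (s, t, \<alpha>) \<in> \<Gamma>"
  using psg unfolding path_system_group_def by blast

lemma transl: "(a, b, \<alpha>) \<in> \<Gamma> \<Longrightarrow> u \<in> carrier G \<Longrightarrow> (a, b, \<phi> u \<circ> \<alpha>) \<in> \<Gamma>"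
  using psg unfolding path_system_group_def by blast

lemma exists_path: obtains a b \<alpha> where "(a, b, \<alpha>) \<in> \<Gamma>" "\<alpha> a = x" "\<alpha> b = y"
proof -
  obtain p where "p \<in> \<Gamma>" "joins p x y" using psg unfolding path_system_group_def by blast
  then show ?thesis using that unfolding joins_def by (cases p) auto
qed

lemma g_carr: "g \<in> carrier G" using ce unfolding constricting_element_def by blast
lemma g_ord: "n > 0 \<Longrightarrow> g [^] (n::nat) \<noteq> \<one>" using ce unfolding constricting_element_def by blast
lemma A_inv: "\<phi> (g [^] (n::int)) ` A \<subseteq> A" using ce unfolding constricting_element_def by blast
lemma cmap: "constricting_map \<Gamma> \<delta> A \<pi>" using ce unfolding constricting_element_def by blast
lemma A_cob: "a \<in> A \<Longrightarrow> a' \<in> A \<Longrightarrow> \<exists>n::int. dist a (\<phi> (g [^] n) a') \<le> \<delta>"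
  using ce unfolding constricting_element_def by blast
lemma piA: "\<pi> x \<in> A" using cmap unfolding constricting_map_def by blast
lemma CS1: "x \<in> A \<Longrightarrow> dist x (\<pi> x) \<le> \<delta>" using cmap unfolding constricting_map_def by blast
lemma delta_ge0: "\<delta> \<ge> 0" using CS1[OF piA[of undefined]] by (meson dual_order.trans zero_le_dist)

lemma CS2:
  assumes "(s, t, \<alpha>) \<in> \<Gamma>" "dist (\<pi> (\<alpha> s)) (\<pi> (\<alpha> t)) > \<delta>"
  shows "\<exists>v\<in>{s..t}. dist (\<alpha> v) (\<pi> (\<alpha> s)) \<le> \<delta>" "\<exists>v\<in>{s..t}. dist (\<alpha> v) (\<pi> (\<alpha> t)) \<le> \<delta>"
proof -
  have "path_image_of (s, t, \<alpha>) \<inter> cball (\<pi> (\<alpha> s)) \<delta> \<noteq> {} \<and> path_image_of (s, t, \<alpha>) \<inter> cball (\<pi> (\<alpha> t)) \<delta> \<noteq> {}"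
    using cmap assms unfolding constricting_map_def joins_def by blast
  then show "\<exists>v\<in>{s..t}. dist (\<alpha> v) (\<pi> (\<alpha> s)) \<le> \<delta>" "\<exists>v\<in>{s..t}. dist (\<alpha> v) (\<pi> (\<alpha> t)) \<le> \<delta>"
    unfolding path_image_of_def by (auto simp: dist_commute)
qed

lemma pow_inj: "g [^] (i::int) = g [^] (j::int) \<Longrightarrow> i = j"
proof (rule ccontr)
  assume h: "g [^] i = g [^] j" "i \<noteq> j"
  have "g [^] (i - j) = \<one>" using h g_carr by (simp add: int_pow_diff)
  moreover have "g [^] (j - i) = \<one>" using h g_carr by (simp add: int_pow_diff)
  ultimately show False
  proof (cases "i < j")
    case True
    then have "g [^] (nat (j - i)) = \<one>" using \<open>g [^] (j - i) = \<one>\<close> by (metis int_pow_int less_imp_le diff_ge_0_iff_ge nat_0_le)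
    then show False using g_ord[of "nat (j - i)"] True by simp
  next
    case False
    then have "i > j" using h(2) by simp
    then have "g [^] (nat (i - j)) = \<one>" using \<open>g [^] (i - j) = \<one>\<close> by (metis int_pow_int less_imp_le diff_ge_0_iff_ge nat_0_le)
    then show False using g_ord[of "nat (i - j)"] \<open>i > j\<close> by simp
  qed
qed

end

context PS begin

definition K1 where "K1 = 2 * \<delta> + mu * \<delta> + nu"
definition Big where "Big = 2 * K1 + 2 * \<delta>"
definition D3 where "D3 = 3 * \<delta> + K1"
definition C1 where "C1 = max (2 * mu * \<delta> + nu + \<delta>) (mu * D3 + nu + \<delta>)"

lemma K1_ge: "K1 \<ge> 0" unfolding K1_def using delta_ge0 mu_ge1 nu_ge0 by simp

lemma projnear:
  assumes "a \<in> A" "dist x a \<le> r"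
  shows "dist (\<pi> x) a \<le> 2 * \<delta> + mu * r + nu"
proof -
  obtain s0 s1 \<beta> where p: "(s0, s1, \<beta>) \<in> \<Gamma>" "\<beta> s0 = x" "\<beta> s1 = a" by (rule exists_path)
  have r0: "r \<ge> 0" using assms(2) zero_le_dist order_trans by blast
  have le: "s0 \<le> s1" using ab[OF p(1)] .
  show ?thesis
  proof (cases "dist (\<pi> x) (\<pi> a) > \<delta>")
    case True
    then obtain v where v: "v \<in> {s0..s1}" "dist (\<beta> v) (\<pi> x) \<le> \<delta>"
      using CS2(1)[OF p(1)] p(2,3) by auto
    have "\<bar>s0 - s1\<bar> \<le> mu * dist (\<beta> s0) (\<beta> s1) + nu" using qg2[OF p(1), of s0 s1] le by auto
    also have "\<dots> \<le> mu * r + nu" using p assms(2) mu_ge1 by (simp add: mult_left_mono)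
    finally have "\<bar>s0 - s1\<bar> \<le> mu * r + nu" .
    moreover have "dist (\<beta> v) (\<beta> s1) \<le> \<bar>v - s1\<bar>" using qg1[OF p(1), of v s1] v le by auto
    moreover have "\<bar>v - s1\<bar> \<le> \<bar>s0 - s1\<bar>" using v by auto
    ultimately have "dist (\<beta> v) a \<le> mu * r + nu" using p(3) by (metis order_trans)
    then have "dist (\<pi> x) a \<le> \<delta> + (mu * r + nu)" using v(2) dist_triangle2[of "\<pi> x" a "\<beta> v"] by (simp add: dist_commute)
    then show ?thesis using delta_ge0 by linarith
  next
    case False
    have "dist (\<pi> x) a \<le> dist (\<pi> x) (\<pi> a) + dist (\<pi> a) a" by (rule dist_triangle)
    also have "\<dots> \<le> 2 * \<delta>" using False CS1[OF assms(1)] by (simp add: dist_commute)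
    finally show ?thesis using mu_ge1 r0 nu_ge0 by (smt (verit) mult_nonneg_nonneg)
  qed
qed

lemma nearA:
  assumes p: "(a, b, \<alpha>) \<in> \<Gamma>" and st: "a \<le> s" "s \<le> t" "t \<le> u" "u \<le> b"
    and q: "q \<in> A" "q' \<in> A" "dist (\<alpha> s) q \<le> \<delta>" "dist (\<alpha> u) q' \<le> \<delta>" "dist q q' > Big"
  shows "\<exists>a'\<in>A. dist (\<alpha> t) a' \<le> C1"
proof -
  define pp where "pp = \<pi> (\<alpha> t)"
  have ppA: "pp \<in> A" unfolding pp_def by (rule piA)
  have d0: "\<delta> \<ge> 0" by (rule delta_ge0)
  have ps: "dist (\<pi> (\<alpha> s)) q \<le> K1" using projnear[OF q(1) q(3)] unfolding K1_def by simp
  have pu: "dist (\<pi> (\<alpha> u)) q' \<le> K1" using projnear[OF q(2) q(4)] unfolding K1_def by simp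
  have pst: "(s, t, \<alpha>) \<in> \<Gamma>" using sub[OF p] st by auto
  have ptu: "(t, u, \<alpha>) \<in> \<Gamma>" using sub[OF p] st by auto
  have qgab: "\<And>x y. x \<in> {a..b} \<Longrightarrow> y \<in> {a..b} \<Longrightarrow> \<bar>x - y\<bar> \<le> mu * dist (\<alpha> x) (\<alpha> y) + nu"
    using qg2[OF p] by blast
  have qgab1: "\<And>x y. x \<in> {a..b} \<Longrightarrow> y \<in> {a..b} \<Longrightarrow> dist (\<alpha> x) (\<alpha> y) \<le> \<bar>x - y\<bar>"
    using qg1[OF p] by blast
  have tri: "\<And>x y z::'x. dist x z \<le> dist x y + dist y z" by (rule dist_triangle)
  show ?thesis
  proof (cases "dist (\<pi> (\<alpha> s)) pp \<le> \<delta>")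
    case True
    have "dist q q' \<le> dist q (\<pi> (\<alpha> s)) + dist (\<pi> (\<alpha> s)) pp + dist pp (\<pi> (\<alpha> u)) + dist (\<pi> (\<alpha> u)) q'"
      using tri[of q q' "\<pi> (\<alpha> s)"] tri[of "\<pi> (\<alpha> s)" q' pp] tri[of pp q' "\<pi> (\<alpha> u)"] by linarith
    then have "dist pp (\<pi> (\<alpha> u)) > \<delta>" using True ps pu q(5) unfolding Big_def by (simp add: dist_commute)
    then obtain v' where v': "v' \<in> {t..u}" "dist (\<alpha> v') pp \<le> \<delta>"
      using CS2(1)[OF ptu] unfolding pp_def by blast
    have "dist (\<alpha> s) (\<alpha> v') \<le> dist (\<alpha> s) q + dist q (\<pi> (\<alpha> s)) + dist (\<pi> (\<alpha> s)) pp + dist pp (\<alpha> v')"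
      using tri[of "\<alpha> s" "\<alpha> v'" q] tri[of q "\<alpha> v'" "\<pi> (\<alpha> s)"] tri[of "\<pi> (\<alpha> s)" "\<alpha> v'" pp] by linarith
    also have "\<dots> \<le> D3" using q(3) ps True v'(2) unfolding D3_def by (simp add: dist_commute)
    finally have dsv: "dist (\<alpha> s) (\<alpha> v') \<le> D3" .
    have "\<bar>s - v'\<bar> \<le> mu * dist (\<alpha> s) (\<alpha> v') + nu" using qgab[of s v'] st v' by auto
    also have "\<dots> \<le> mu * D3 + nu" using dsv mu_ge1 by (simp add: mult_left_mono)
    finally have "\<bar>s - v'\<bar> \<le> mu * D3 + nu" .
    moreover have "dist (\<alpha> t) (\<alpha> s) \<le> \<bar>t - s\<bar>" using qgab1[of t s] st by auto
    moreover have "\<bar>t - s\<bar> \<le> \<bar>s - v'\<bar>" using v' st by auto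
    ultimately have "dist (\<alpha> t) q \<le> mu * D3 + nu + \<delta>" using q(3) tri[of "\<alpha> t" q "\<alpha> s"] by linarith
    then show ?thesis using q(1) unfolding C1_def by (intro bexI[of _ q]) auto
  next
    case F1: False
    show ?thesis
    proof (cases "dist pp (\<pi> (\<alpha> u)) \<le> \<delta>")
      case True
      obtain v where v: "v \<in> {s..t}" "dist (\<alpha> v) pp \<le> \<delta>"
        using CS2(2)[OF pst] F1 unfolding pp_def by force
      have "dist (\<alpha> u) (\<alpha> v) \<le> dist (\<alpha> u) q' + dist q' (\<pi> (\<alpha> u)) + dist (\<pi> (\<alpha> u)) pp + dist pp (\<alpha> v)"
        using tri[of "\<alpha> u" "\<alpha> v" q'] tri[of q' "\<alpha> v" "\<pi> (\<alpha> u)"] tri[of "\<pi> (\<alpha> u)" "\<alpha> v" pp] by linarith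
      also have "\<dots> \<le> D3" using q(4) pu True v(2) unfolding D3_def by (simp add: dist_commute)
      finally have duv: "dist (\<alpha> u) (\<alpha> v) \<le> D3" .
      have "\<bar>u - v\<bar> \<le> mu * dist (\<alpha> u) (\<alpha> v) + nu" using qgab[of u v] st v by auto
      also have "\<dots> \<le> mu * D3 + nu" using duv mu_ge1 by (simp add: mult_left_mono)
      finally have "\<bar>u - v\<bar> \<le> mu * D3 + nu" .
      moreover have "dist (\<alpha> t) (\<alpha> u) \<le> \<bar>t - u\<bar>" using qgab1[of t u] st by auto
      moreover have "\<bar>t - u\<bar> \<le> \<bar>u - v\<bar>" using v st by auto
      ultimately have "dist (\<alpha> t) q' \<le> mu * D3 + nu + \<delta>" using q(4) tri[of "\<alpha> t" q' "\<alpha> u"] by linarith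
      then show ?thesis using q(2) unfolding C1_def by (intro bexI[of _ q']) auto
    next
      case F2: False
      obtain v where v: "v \<in> {s..t}" "dist (\<alpha> v) pp \<le> \<delta>"
        using CS2(2)[OF pst] F1 unfolding pp_def by force
      obtain v' where v': "v' \<in> {t..u}" "dist (\<alpha> v') pp \<le> \<delta>"
        using CS2(1)[OF ptu] F2 unfolding pp_def by force
      have dvv: "dist (\<alpha> v) (\<alpha> v') \<le> 2 * \<delta>" using v(2) v'(2) tri[of "\<alpha> v" "\<alpha> v'" pp] by (simp add: dist_commute)
      have "\<bar>v - v'\<bar> \<le> mu * dist (\<alpha> v) (\<alpha> v') + nu" using qgab[of v v'] st v v' by auto
      also have "\<dots> \<le> mu * (2 * \<delta>) + nu" using dvv mu_ge1 by (simp add: mult_left_mono)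
      finally have "\<bar>v - v'\<bar> \<le> mu * (2 * \<delta>) + nu" .
      moreover have "dist (\<alpha> t) (\<alpha> v) \<le> \<bar>t - v\<bar>" using qgab1[of t v] st v by auto
      moreover have "\<bar>t - v\<bar> \<le> \<bar>v - v'\<bar>" using v v' by auto
      ultimately have "dist (\<alpha> t) pp \<le> 2 * mu * \<delta> + nu + \<delta>" using v(2) tri[of "\<alpha> t" pp "\<alpha> v"] by linarith
      then show ?thesis using ppA unfolding C1_def by (intro bexI[of _ pp]) auto
    qed
  qed
qed

end


lemma ivt_int:
  fixes f :: "nat \<Rightarrow> int"
  assumes "\<forall>k<N. \<bar>f (Suc k) - f k\<bar> \<le> B" "min (f 0) (f N) \<le> t" "t \<le> max (f 0) (f N)" "B \<ge> 0"
  shows "\<exists>k\<le>N. \<bar>f k - t\<bar> \<le> B"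
  using assms
proof (induction N)
  case 0
  then show ?case by auto
next
  case (Suc N)
  show ?case
  proof (cases "min (f 0) (f N) \<le> t \<and> t \<le> max (f 0) (f N)")
    case True
    moreover have "\<forall>k<N. \<bar>f (Suc k) - f k\<bar> \<le> B" using Suc.prems(1) by auto
    ultimately obtain k where "k \<le> N" "\<bar>f k - t\<bar> \<le> B" using Suc.IH Suc.prems(4) by blast
    then show ?thesis using le_SucI by blast
  next
    case False
    then have "\<bar>f (Suc N) - t\<bar> \<le> \<bar>f (Suc N) - f N\<bar>" using Suc.prems(2,3) by linarith
    also have "\<dots> \<le> B" using Suc.prems(1) by auto
    finally show ?thesis by blast
  qed
qed

context PS begin

definition a0 where "a0 = \<pi> undefined"
lemma a0A: "a0 \<in> A" unfolding a0_def by (rule piA)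

definition Jset where "Jset r = {j::int. dist a0 (\<phi> (g [^] j) a0) \<le> r}"

lemma Jset_fin: "finite (Jset r)"
proof -
  have "(\<lambda>j. g [^] j) ` Jset r \<subseteq> {f \<in> carrier G. dist a0 (\<phi> f a0) \<le> r}"
    unfolding Jset_def using g_carr by auto
  then have "finite ((\<lambda>j. g [^] j) ` Jset r)" using proper finite_subset by blast
  moreover have "inj_on (\<lambda>j. g [^] j) (Jset r)" by (meson inj_onI pow_inj)
  ultimately show ?thesis using finite_imageD by blast
qed

definition N0 where "N0 r = Max ((\<lambda>j. nat \<bar>j\<bar>) ` Jset r)"

lemma N0_bound: "j \<in> Jset r \<Longrightarrow> \<bar>j\<bar> \<le> int (N0 r)"
proof -
  assume "j \<in> Jset r"
  then have "nat \<bar>j\<bar> \<le> N0 r" unfolding N0_def using Jset_fin by (intro Max_ge) auto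
  then show ?thesis by simp
qed

definition C6 where "C6 r = Max ((\<lambda>j. dist a0 (\<phi> (g [^] j) a0)) ` {- int (N0 r) .. int (N0 r)})"

lemma C6_bound: "\<bar>j\<bar> \<le> int (N0 r) \<Longrightarrow> dist a0 (\<phi> (g [^] j) a0) \<le> C6 r"
proof -
  assume h: "\<bar>j\<bar> \<le> int (N0 r)"
  then have "j \<in> {- int (N0 r) .. int (N0 r)}" by auto
  then show ?thesis unfolding C6_def by (intro Max_ge) auto
qed

definition L where "L = mu * (2 * C1 + 2 * \<delta>) + nu + 1"
definition C2 where "C2 \<eta> = \<eta> + 1 + C1 + \<delta>"
definition C3 where "C3 \<eta> = 2 * C2 \<eta> + \<eta>"
definition Mc where "Mc \<eta> = card {f \<in> carrier G. dist a0 (\<phi> f a0) \<le> C3 \<eta>}"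
definition RR where "RR = L + 2 * C1 + 2 * \<delta>"
definition C0 where "C0 \<eta> = \<delta> + C6 RR + C2 \<eta>"
definition Theta where "Theta \<eta> = max Big (real (Mc \<eta>) * L + 2 * \<delta>)"

lemma C1_ge: "C1 \<ge> 0"
proof -
  have "2 * mu * \<delta> \<ge> 0" using delta_ge0 mu_ge1 by simp
  then have "2 * mu * \<delta> + nu + \<delta> \<ge> 0" using nu_ge0 delta_ge0 by linarith
  then show ?thesis unfolding C1_def by linarith
qed
lemma L_pos: "L \<ge> 1"
proof -
  have "mu * (2 * C1 + 2 * \<delta>) \<ge> 0" using delta_ge0 mu_ge1 C1_ge by simp
  then show ?thesis unfolding L_def using nu_ge0 by linarith
qed

lemma pow_pres:
  assumes "x \<in> carrier G" "\<phi> x ` Y \<subseteq> Y"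
  shows "\<phi> (x [^] (k::nat)) ` Y \<subseteq> Y"
proof (induction k)
  case 0
  have "\<phi> (x [^] (0::nat)) y = y" for y using act_one by (metis nat_pow_0)
  then show ?case by auto
next
  case (Suc k)
  have "\<phi> (x [^] Suc k) y = \<phi> (x [^] k) (\<phi> x y)" for y
  proof -
    have "x [^] Suc k = x [^] k \<otimes> x" by (rule nat_pow_Suc)
    then show ?thesis using act_mult[of "x [^] k" x y] assms(1) nat_pow_closed by metis
  qed
  note eq = this
  show ?case
  proof (rule image_subsetI)
    fix y assume "y \<in> Y"
    then have "\<phi> x y \<in> Y" using assms(2) by blast
    then have "\<phi> (x [^] k) (\<phi> x y) \<in> Y" using Suc.IH by blast
    then show "\<phi> (x [^] Suc k) y \<in> Y" using eq by simp
  qed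
qed

lemma intpow_pres:
  assumes "e \<in> carrier G" "\<phi> e ` Y \<subseteq> Y" "\<phi> (inv e) ` Y \<subseteq> Y"
  shows "\<phi> (e [^] (q::int)) ` Y \<subseteq> Y"
proof (cases "q < 0")
  case True
  have d: "e [^] q = inv (e [^] (nat (-q)))"
    using True int_pow_def2[of G e q] by presburger
  have "inv (e [^] (nat (-q))) = (inv e) [^] (nat (-q))" using nat_pow_inv[OF assms(1)] by (rule sym)
  with d have "e [^] q = (inv e) [^] (nat (-q))" by (rule trans)
  moreover have "\<phi> ((inv e) [^] (nat (-q))) ` Y \<subseteq> Y" by (rule pow_pres[OF inv_closed[OF assms(1)] assms(3)])
  ultimately show ?thesis by simp
next
  case False
  then have "e [^] q = e [^] (nat q)" using int_pow_def2[of G e q] by presburger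
  moreover have "\<phi> (e [^] (nat q)) ` Y \<subseteq> Y" by (rule pow_pres[OF assms(1,2)])
  ultimately show ?thesis by simp
qed

end

context PS begin

lemma big_ge: "Big \<ge> \<delta>" unfolding Big_def using K1_ge delta_ge0 by linarith

lemma core:
  assumes eta: "\<eta> \<ge> 0"
    and HC: "H \<subseteq> carrier G" and Hinv: "\<forall>h\<in>H. inv h \<in> H" and HY: "\<forall>h\<in>H. \<phi> h ` Y \<subseteq> Y"
    and qc: "quasi_convex \<Gamma> \<eta> Y" and cob: "\<forall>y\<in>Y. \<forall>y'\<in>Y. \<exists>h\<in>H. dist y (\<phi> h y') \<le> \<eta>"
    and y12: "y1 \<in> Y" "y2 \<in> Y" "dist (\<pi> y1) (\<pi> y2) > Theta \<eta>"
  shows "A \<subseteq> nbhd Y (C0 \<eta>)"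
proof -
  have tri: "\<And>x z y::'x. dist x z \<le> dist x y + dist y z" by (rule dist_triangle)
  have d0: "\<delta> \<ge> 0" by (rule delta_ge0)
  have Lp: "L \<ge> 1" by (rule L_pos)
  have C1g: "C1 \<ge> 0" by (rule C1_ge)
  obtain a b \<alpha> where p: "(a, b, \<alpha>) \<in> \<Gamma>" "\<alpha> a = y1" "\<alpha> b = y2" by (rule exists_path)
  have aleb: "a \<le> b" by (rule ab[OF p(1)])
  have img: "t \<in> {a..b} \<Longrightarrow> Y \<noteq> {} \<and> infdist (\<alpha> t) Y \<le> \<eta>" for t
  proof -
    assume t: "t \<in> {a..b}"
    have "path_image_of (a, b, \<alpha>) \<subseteq> nbhd Y \<eta>"
      using qc p y12 unfolding quasi_convex_def joins_def by blast
    moreover have "\<alpha> t \<in> path_image_of (a, b, \<alpha>)" using t unfolding path_image_of_def by simp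
    ultimately show ?thesis unfolding nbhd_def by blast
  qed
  have Th: "Theta \<eta> \<ge> Big" "Theta \<eta> \<ge> real (Mc \<eta>) * L + 2 * \<delta>" unfolding Theta_def by auto
  have "dist (\<pi> (\<alpha> a)) (\<pi> (\<alpha> b)) > \<delta>" using y12(3) p Th big_ge by simp
  then obtain ta tb where tab: "ta \<in> {a..b}" "dist (\<alpha> ta) (\<pi> y1) \<le> \<delta>" "tb \<in> {a..b}" "dist (\<alpha> tb) (\<pi> y2) \<le> \<delta>"
    using CS2[OF p(1)] p(2,3) by metis
  obtain s u q q' where su: "a \<le> s" "s \<le> u" "u \<le> b" and qq: "q \<in> A" "q' \<in> A" "dist (\<alpha> s) q \<le> \<delta>"
     "dist (\<alpha> u) q' \<le> \<delta>" "dist q q' > Theta \<eta>"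
  proof (cases "ta \<le> tb")
    case True
    show ?thesis by (rule that[of ta tb "\<pi> y1" "\<pi> y2"]) (use True tab y12 piA in auto)
  next
    case False
    show ?thesis by (rule that[of tb ta "\<pi> y2" "\<pi> y1"]) (use False tab y12 piA in \<open>auto simp: dist_commute\<close>)
  qed
  have qqbig: "dist q q' > Big" using qq(5) Th by linarith
  define MM where "MM = Mc \<eta>"
  have "dist q q' \<le> dist q (\<alpha> s) + dist (\<alpha> s) (\<alpha> u) + dist (\<alpha> u) q'"
    using tri[of q q' "\<alpha> s"] tri[of "\<alpha> s" q' "\<alpha> u"] by linarith
  moreover have "dist (\<alpha> s) (\<alpha> u) \<le> \<bar>s - u\<bar>" using qg1[OF p(1), of s u] su by auto
  ultimately have "u - s \<ge> dist q q' - 2 * \<delta>" using qq(3,4) su(2) by (simp add: dist_commute)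
  then have ulen: "u - s \<ge> real MM * L" using qq(5) Th(2) unfolding MM_def by linarith
  define t where "t i = s + real i * L" for i :: nat
  have tin: "i \<le> MM \<Longrightarrow> s \<le> t i \<and> t i \<le> u" for i
  proof -
    assume "i \<le> MM"
    then have "real i * L \<le> real MM * L" using Lp by (intro mult_right_mono) auto
    moreover have "real i * L \<ge> 0" using Lp by simp
    ultimately show ?thesis unfolding t_def using ulen by linarith
  qed
  have tab': "i \<le> MM \<Longrightarrow> t i \<in> {a..b}" for i using tin su by fastforce
  have "\<forall>i. \<exists>yn::'x \<times> int. i \<le> MM \<longrightarrow> (fst yn \<in> Y \<and> dist (\<alpha> (t i)) (fst yn) \<le> \<eta> + 1 \<and>
      dist (\<alpha> (t i)) (\<phi> (g [^] (snd yn)) a0) \<le> C1 + \<delta>)"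
  proof
    fix i
    show "\<exists>yn::'x \<times> int. i \<le> MM \<longrightarrow> (fst yn \<in> Y \<and> dist (\<alpha> (t i)) (fst yn) \<le> \<eta> + 1 \<and>
      dist (\<alpha> (t i)) (\<phi> (g [^] (snd yn)) a0) \<le> C1 + \<delta>)"
    proof (cases "i \<le> MM")
      case True
      have Yi: "Y \<noteq> {}" "infdist (\<alpha> (t i)) Y < \<eta> + 1" using img[OF tab'[OF True]] by auto
      obtain y where y: "y \<in> Y" "dist (\<alpha> (t i)) y < \<eta> + 1" by (rule infdist_lessE[OF Yi])
      obtain a' where a': "a' \<in> A" "dist (\<alpha> (t i)) a' \<le> C1"
        using nearA[OF p(1) su(1) _ _ su(3) qq(1,2,3,4) qqbig, of "t i"] tin[OF True] by blast
      obtain n :: int where n: "dist a' (\<phi> (g [^] n) a0) \<le> \<delta>" using A_cob[OF a'(1) a0A] by blast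
      have "dist (\<alpha> (t i)) (\<phi> (g [^] n) a0) \<le> C1 + \<delta>"
        using tri[of "\<alpha> (t i)" "\<phi> (g [^] n) a0" a'] a'(2) n by linarith
      then show ?thesis using y by (intro exI[of _ "(y, n)"]) auto
    qed auto
  qed
  then have "\<exists>F::nat \<Rightarrow> 'x \<times> int. \<forall>i. i \<le> MM \<longrightarrow> (fst (F i) \<in> Y \<and> dist (\<alpha> (t i)) (fst (F i)) \<le> \<eta> + 1 \<and>
      dist (\<alpha> (t i)) (\<phi> (g [^] (snd (F i))) a0) \<le> C1 + \<delta>)" by metis
  then obtain F :: "nat \<Rightarrow> 'x \<times> int" where F: "\<forall>i. i \<le> MM \<longrightarrow> (fst (F i) \<in> Y \<and> dist (\<alpha> (t i)) (fst (F i)) \<le> \<eta> + 1 \<and>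
      dist (\<alpha> (t i)) (\<phi> (g [^] (snd (F i))) a0) \<le> C1 + \<delta>)" by (elim exE)
  define yf where "yf i = fst (F i)" for i
  define nf where "nf i = snd (F i)" for i
  have yfY: "i \<le> MM \<Longrightarrow> yf i \<in> Y" for i using F unfolding yf_def by blast
  have yfd: "i \<le> MM \<Longrightarrow> dist (\<alpha> (t i)) (yf i) \<le> \<eta> + 1" for i using F unfolding yf_def by blast
  have nfd: "i \<le> MM \<Longrightarrow> dist (\<alpha> (t i)) (\<phi> (g [^] (nf i)) a0) \<le> C1 + \<delta>" for i using F unfolding nf_def by blast
  have C2d: "i \<le> MM \<Longrightarrow> dist (yf i) (\<phi> (g [^] (nf i)) a0) \<le> C2 \<eta>" for i
  proof -
    assume i: "i \<le> MM"
    show ?thesis using tri[of "yf i" "\<phi> (g [^] (nf i)) a0" "\<alpha> (t i)"] yfd[OF i] nfd[OF i]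
      unfolding C2_def by (simp add: dist_commute)
  qed
  have "\<forall>i. \<exists>h. i \<le> MM \<longrightarrow> h \<in> H \<and> dist (yf i) (\<phi> h (yf 0)) \<le> \<eta>"
    using cob yfY by blast
  then have "\<exists>hf. \<forall>i. i \<le> MM \<longrightarrow> hf i \<in> H \<and> dist (yf i) (\<phi> (hf i) (yf 0)) \<le> \<eta>"
    by metis
  then obtain hf where hf: "\<forall>i. i \<le> MM \<longrightarrow> hf i \<in> H \<and> dist (yf i) (\<phi> (hf i) (yf 0)) \<le> \<eta>"
    by (elim exE)
  have hfC: "i \<le> MM \<Longrightarrow> hf i \<in> carrier G" for i using hf HC by blast
  have gC: "g [^] (n::int) \<in> carrier G" for n using g_carr by simp
  define ff where "ff i = inv (g [^] nf 0) \<otimes> (inv (hf i) \<otimes> g [^] nf i)" for i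
  define FS where "FS = {f \<in> carrier G. dist a0 (\<phi> f a0) \<le> C3 \<eta>}"
  have ffF: "i \<le> MM \<Longrightarrow> ff i \<in> FS" for i
  proof -
    assume i: "i \<le> MM"
    have hC: "hf i \<in> carrier G" using hfC[OF i] .
    have c: "ff i \<in> carrier G" unfolding ff_def using hC gC by simp
    define X where "X = \<phi> (g [^] nf i) a0"
    have e1: "\<phi> (ff i) a0 = \<phi> (inv (g [^] nf 0)) (\<phi> (inv (hf i)) X)"
      unfolding ff_def X_def using hC gC by (simp add: act_mult)
    have "dist a0 (\<phi> (ff i) a0) = dist (\<phi> (g [^] nf 0) a0) (\<phi> (g [^] nf 0) (\<phi> (ff i) a0))"
      using iso[OF gC] by simp
    also have "\<dots> = dist (\<phi> (g [^] nf 0) a0) (\<phi> (inv (hf i)) X)" using e1 act_inv2[OF gC] by simp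
    also have "\<dots> \<le> dist (\<phi> (g [^] nf 0) a0) (yf 0) + dist (yf 0) (\<phi> (inv (hf i)) X)" by (rule tri)
    also have "dist (yf 0) (\<phi> (inv (hf i)) X) = dist (\<phi> (hf i) (yf 0)) X"
      using iso[OF hC, of "yf 0" "\<phi> (inv (hf i)) X"] act_inv2[OF hC] by simp
    also have "\<dots> \<le> dist (\<phi> (hf i) (yf 0)) (yf i) + dist (yf i) X" by (rule tri)
    finally have "dist a0 (\<phi> (ff i) a0) \<le> dist (\<phi> (g [^] nf 0) a0) (yf 0) + (dist (\<phi> (hf i) (yf 0)) (yf i) + dist (yf i) X)"
      by simp
    moreover have "dist (\<phi> (g [^] nf 0) a0) (yf 0) \<le> C2 \<eta>" using C2d[of 0] by (simp add: dist_commute)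
    moreover have "dist (\<phi> (hf i) (yf 0)) (yf i) \<le> \<eta>" using hf i by (simp add: dist_commute)
    moreover have "dist (yf i) X \<le> C2 \<eta>" using C2d[OF i] unfolding X_def .
    ultimately have "dist a0 (\<phi> (ff i) a0) \<le> C3 \<eta>" unfolding C3_def by linarith
    then show ?thesis unfolding FS_def using c by simp
  qed
  have FSfin: "finite FS" unfolding FS_def by (rule proper)
  have "\<not> inj_on ff {..MM}"
  proof
    assume "inj_on ff {..MM}"
    moreover have "ff ` {..MM} \<subseteq> FS" using ffF by auto
    ultimately have "card {..MM} \<le> card FS" using card_inj_on_le FSfin by blast
    then show False unfolding FS_def MM_def Mc_def by simp
  qed
  then obtain i i' where ii: "i < i'" "i' \<le> MM" "ff i = ff i'"
    unfolding inj_on_def by (metis atMost_iff linorder_neqE_nat)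
  have iM: "i \<le> MM" using ii by simp
  have hC: "hf i \<in> carrier G" "hf i' \<in> carrier G" using hfC iM ii(2) by auto
  have hH: "hf i \<in> H" "hf i' \<in> H" using hf iM ii(2) by auto
  have eqw: "\<phi> (inv (hf i)) (\<phi> (g [^] nf i) w) = \<phi> (inv (hf i')) (\<phi> (g [^] nf i') w)" for w
  proof -
    have "\<phi> (ff i) w = \<phi> (ff i') w" using ii(3) by simp
    then have "\<phi> (inv (g [^] nf 0)) (\<phi> (inv (hf i)) (\<phi> (g [^] nf i) w)) =
               \<phi> (inv (g [^] nf 0)) (\<phi> (inv (hf i')) (\<phi> (g [^] nf i') w))"
      unfolding ff_def using hC gC by (simp add: act_mult)
    then show ?thesis using act_inv2[OF gC, of "nf 0"] by metis
  qed
  define m where "m = nf i' - nf i"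
  define e where "e = g [^] m"
  have eC: "e \<in> carrier G" unfolding e_def using gC .
  have e_split: "e = g [^] nf i' \<otimes> inv (g [^] nf i)" unfolding e_def m_def using g_carr by (simp add: int_pow_diff)
  have ie_split: "inv e = g [^] nf i \<otimes> inv (g [^] nf i')"
  proof -
    have "inv e = g [^] (- m)" unfolding e_def using g_carr by (simp add: int_pow_neg)
    also have "\<dots> = g [^] (nf i - nf i')" unfolding m_def by simp
    finally show ?thesis using g_carr by (simp add: int_pow_diff)
  qed
  have eY: "\<phi> e ` Y \<subseteq> Y"
  proof (rule image_subsetI)
    fix y assume y: "y \<in> Y"
    define w where "w = \<phi> (inv (g [^] nf i)) y"
    have "\<phi> (g [^] nf i) w = y" unfolding w_def using act_inv2[OF gC] by simp
    then have "\<phi> (inv (hf i)) y = \<phi> (inv (hf i')) (\<phi> (g [^] nf i') w)" using eqw[of w] by simp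
    then have "\<phi> (g [^] nf i') w = \<phi> (hf i') (\<phi> (inv (hf i)) y)" using act_inv2[OF hC(2)] by metis
    moreover have "\<phi> (inv (hf i)) y \<in> Y" using HY Hinv hH(1) y by blast
    then have "\<phi> (hf i') (\<phi> (inv (hf i)) y) \<in> Y" using HY hH(2) by blast
    moreover have "\<phi> e y = \<phi> (g [^] nf i') w" unfolding e_split w_def using gC by (simp add: act_mult)
    ultimately show "\<phi> e y \<in> Y" by simp
  qed
  have ieY: "\<phi> (inv e) ` Y \<subseteq> Y"
  proof (rule image_subsetI)
    fix y assume y: "y \<in> Y"
    define w where "w = \<phi> (inv (g [^] nf i')) y"
    have "\<phi> (g [^] nf i') w = y" unfolding w_def using act_inv2[OF gC] by simp
    then have "\<phi> (inv (hf i)) (\<phi> (g [^] nf i) w) = \<phi> (inv (hf i')) y" using eqw[of w] by simp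
    then have "\<phi> (g [^] nf i) w = \<phi> (hf i) (\<phi> (inv (hf i')) y)" using act_inv2[OF hC(1)] by metis
    moreover have "\<phi> (inv (hf i')) y \<in> Y" using HY Hinv hH(2) y by blast
    then have "\<phi> (hf i) (\<phi> (inv (hf i')) y) \<in> Y" using HY hH(1) by blast
    moreover have "\<phi> (inv e) y = \<phi> (g [^] nf i) w" unfolding ie_split w_def using gC by (simp add: act_mult)
    ultimately show "\<phi> (inv e) y \<in> Y" by simp
  qed
  have powY: "\<phi> (g [^] (m * q)) ` Y \<subseteq> Y" for q
  proof -
    have "g [^] (m * q) = e [^] q" unfolding e_def using g_carr by (simp add: int_pow_pow)
    then show ?thesis using intpow_pres[OF eC eY ieY, of q] by simp
  qed
  have m0: "m \<noteq> 0"
  proof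
    assume "m = 0"
    then have nn: "nf i = nf i'" unfolding m_def by simp
    have "dist (\<alpha> (t i)) (\<alpha> (t i')) \<le> dist (\<alpha> (t i)) (\<phi> (g [^] nf i) a0) + dist (\<phi> (g [^] nf i) a0) (\<alpha> (t i'))"
      by (rule tri)
    then have dd: "dist (\<alpha> (t i)) (\<alpha> (t i')) \<le> 2 * C1 + 2 * \<delta>"
      using nfd[OF iM] nfd[OF ii(2)] nn by (simp add: dist_commute)
    have "\<bar>t i - t i'\<bar> \<le> mu * dist (\<alpha> (t i)) (\<alpha> (t i')) + nu" using qg2[OF p(1) tab'[OF iM] tab'[OF ii(2)]] .
    also have "\<dots> \<le> mu * (2 * C1 + 2 * \<delta>) + nu" using dd mu_ge1 by (simp add: mult_left_mono)
    finally have "\<bar>t i - t i'\<bar> \<le> L - 1" unfolding L_def by simp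
    moreover have "\<bar>t i - t i'\<bar> = real (i' - i) * L" unfolding t_def using ii(1) Lp
      by (simp add: of_nat_diff left_diff_distrib abs_if)
    moreover have "real (i' - i) * L \<ge> L" using ii(1) Lp by simp
    ultimately show False by linarith
  qed
  have step: "k < MM \<Longrightarrow> \<bar>nf (Suc k) - nf k\<bar> \<le> int (N0 RR)" for k
  proof -
    assume k: "k < MM"
    have k1: "k \<le> MM" "Suc k \<le> MM" using k by auto
    have dtt: "dist (\<alpha> (t k)) (\<alpha> (t (Suc k))) \<le> L"
      using qg1[OF p(1) tab'[OF k1(1)] tab'[OF k1(2)]] Lp unfolding t_def by (simp add: algebra_simps)
    define P where "P = \<phi> (g [^] nf k) a0"
    define P' where "P' = \<phi> (g [^] nf (Suc k)) a0"
    have "dist P P' \<le> dist P (\<alpha> (t k)) + dist (\<alpha> (t k)) P'" by (rule tri)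
    also have "dist (\<alpha> (t k)) P' \<le> dist (\<alpha> (t k)) (\<alpha> (t (Suc k))) + dist (\<alpha> (t (Suc k))) P'" by (rule tri)
    finally have "dist P P' \<le> RR" using nfd[OF k1(1)] nfd[OF k1(2)] dtt unfolding RR_def P_def P'_def
      by (simp add: dist_commute)
    moreover have "P' = \<phi> (g [^] nf k) (\<phi> (g [^] (nf (Suc k) - nf k)) a0)"
    proof -
      have "g [^] nf (Suc k) = g [^] (nf k + (nf (Suc k) - nf k))" by simp
      also have "\<dots> = g [^] nf k \<otimes> g [^] (nf (Suc k) - nf k)" using g_carr by (rule int_pow_mult)
      finally show ?thesis unfolding P'_def using gC by (simp add: act_mult)
    qed
    ultimately have "dist a0 (\<phi> (g [^] (nf (Suc k) - nf k)) a0) \<le> RR" unfolding P_def using iso[OF gC] by simp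
    then show ?thesis using N0_bound unfolding Jset_def by blast
  qed
  show ?thesis
  proof
    fix x assume xA: "x \<in> A"
    obtain n :: int where n: "dist x (\<phi> (g [^] n) a0) \<le> \<delta>" using A_cob[OF xA a0A] by blast
    define w where "w = n - nf i"
    define qq where "qq = w div m"
    define r where "r = w mod m"
    have wqr: "w = m * qq + r" unfolding qq_def r_def by simp
    define tt where "tt = nf i + r"
    have between: "min (nf i) (nf i') \<le> tt \<and> tt \<le> max (nf i) (nf i')"
    proof (cases "m > 0")
      case True
      then have "0 \<le> r" "r < m" unfolding r_def by auto
      then show ?thesis unfolding tt_def m_def by simp
    next
      case False
      then have "m < 0" using m0 by simp
      then have "r \<le> 0" "m < r" unfolding r_def by (auto intro: neg_mod_sign neg_mod_bound)
      then show ?thesis unfolding tt_def m_def by simp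
    qed
    define f where "f j = nf (i + j)" for j
    have "\<exists>k\<le>i' - i. \<bar>f k - tt\<bar> \<le> int (N0 RR)"
    proof (rule ivt_int)
      show "\<forall>k<i' - i. \<bar>f (Suc k) - f k\<bar> \<le> int (N0 RR)"
        unfolding f_def using step ii by (metis add_Suc_right less_diff_conv add.commute less_le_trans)
      show "min (f 0) (f (i' - i)) \<le> tt" "tt \<le> max (f 0) (f (i' - i))"
        unfolding f_def using between ii(1) by auto
    qed auto
    then obtain k where k: "k \<le> i' - i" "\<bar>nf (i + k) - tt\<bar> \<le> int (N0 RR)" unfolding f_def by blast
    define j where "j = nf (i + k)"
    have ikM: "i + k \<le> MM" using k ii by simp
    define s' where "s' = m * qq + j"
    have ns: "\<bar>n - s'\<bar> \<le> int (N0 RR)" using k(2) unfolding s'_def j_def tt_def w_def[symmetric] using wqr w_def by linarith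
    have e1: "\<phi> (g [^] n) a0 = \<phi> (g [^] s') (\<phi> (g [^] (n - s')) a0)"
    proof -
      have "g [^] n = g [^] (s' + (n - s'))" by simp
      also have "\<dots> = g [^] s' \<otimes> g [^] (n - s')" using g_carr by (rule int_pow_mult)
      finally show ?thesis using gC by (simp add: act_mult)
    qed
    have d1: "dist (\<phi> (g [^] n) a0) (\<phi> (g [^] s') a0) \<le> C6 RR"
    proof -
      have "dist (\<phi> (g [^] n) a0) (\<phi> (g [^] s') a0) = dist (\<phi> (g [^] (n - s')) a0) a0"
        using e1 iso[OF gC, of s' "\<phi> (g [^] (n - s')) a0" a0] by simp
      also have "\<dots> \<le> C6 RR" using C6_bound[OF ns] by (simp add: dist_commute)
      finally show ?thesis .
    qed
    have e2: "\<phi> (g [^] s') a0 = \<phi> (g [^] (m * qq)) (\<phi> (g [^] j) a0)"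
    proof -
      have "g [^] s' = g [^] (m * qq) \<otimes> g [^] j" unfolding s'_def using g_carr by (rule int_pow_mult)
      then show ?thesis using gC by (simp add: act_mult)
    qed
    define y' where "y' = \<phi> (g [^] (m * qq)) (yf (i + k))"
    have y'Y: "y' \<in> Y" unfolding y'_def using powY yfY[OF ikM] by blast
    have d2: "dist (\<phi> (g [^] s') a0) y' \<le> C2 \<eta>"
      using e2 iso[OF gC, of "m * qq" "\<phi> (g [^] j) a0" "yf (i + k)"] C2d[OF ikM]
      unfolding y'_def j_def by (simp add: dist_commute)
    have "dist x y' \<le> dist x (\<phi> (g [^] n) a0) + dist (\<phi> (g [^] n) a0) (\<phi> (g [^] s') a0) + dist (\<phi> (g [^] s') a0) y'"
      using tri[of x y' "\<phi> (g [^] n) a0"] tri[of "\<phi> (g [^] n) a0" y' "\<phi> (g [^] s') a0"] by linarith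
    then have "dist x y' \<le> C0 \<eta>" using n d1 d2 unfolding C0_def by linarith
    then have "infdist x Y \<le> C0 \<eta>" using infdist_le2[OF y'Y] by blast
    then show "x \<in> nbhd Y (C0 \<eta>)" unfolding nbhd_def using y'Y by blast
  qed
qed

end

context PS begin

lemma rep:
  assumes R: "coset_representatives G \<phi> A R" and u: "u \<in> carrier G"
  obtains u0 where "u0 \<in> R" "u0 \<in> carrier G" "\<phi> u0 ` A = \<phi> u ` A"
    "(THE u0. u0 \<in> R \<and> \<phi> u0 ` A = \<phi> u ` A) = u0"
proof -
  have RC: "R \<subseteq> carrier G" using R unfolding coset_representatives_def by blast
  obtain u0 where u0: "u0 \<in> R" "u0 \<in> l_coset G u (stabiliser G \<phi> A)"
    and uq: "\<And>v. v \<in> R \<and> v \<in> l_coset G u (stabiliser G \<phi> A) \<Longrightarrow> v = u0"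
    using R u unfolding coset_representatives_def by metis
  obtain s where s: "s \<in> carrier G" "\<phi> s ` A = A" "u0 = u \<otimes> s"
    using u0(2) unfolding l_coset_def stabiliser_def by blast
  have u0C: "u0 \<in> carrier G" using u0(1) RC by blast
  have img: "\<phi> u0 ` A = \<phi> u ` A"
  proof -
    have "\<phi> u0 ` A = \<phi> u ` (\<phi> s ` A)" unfolding s(3) using u s(1) by (simp add: act_mult image_image)
    then show ?thesis using s(2) by simp
  qed
  have "(THE u0. u0 \<in> R \<and> \<phi> u0 ` A = \<phi> u ` A) = u0"
  proof (rule the_equality)
    show "u0 \<in> R \<and> \<phi> u0 ` A = \<phi> u ` A" using u0(1) img by blast
  next
    fix v assume v: "v \<in> R \<and> \<phi> v ` A = \<phi> u ` A"
    have vC: "v \<in> carrier G" using v RC by blast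
    define s1 where "s1 = inv u \<otimes> v"
    have s1C: "s1 \<in> carrier G" unfolding s1_def using u vC by simp
    have "\<phi> s1 ` A = \<phi> (inv u) ` (\<phi> v ` A)" unfolding s1_def using u vC by (simp add: act_mult image_image)
    also have "\<dots> = \<phi> (inv u) ` (\<phi> u ` A)" using v by simp
    also have "\<dots> = A" using act_inv1[OF u] by (simp add: image_image)
    finally have "s1 \<in> stabiliser G \<phi> A" unfolding stabiliser_def using s1C by simp
    moreover have "u \<otimes> s1 = v" unfolding s1_def using u vC by (simp add: m_assoc[symmetric])
    ultimately have "v \<in> l_coset G u (stabiliser G \<phi> A)" unfolding l_coset_def by blast
    then show "v = u0" using uq v by blast
  qed
  then show ?thesis using that u0(1) u0C img by blast
qed

lemma transl_core_hyps:
  assumes qcs: "quasi_convex_subgroup G \<phi> \<Gamma> \<eta> H Y" and u0: "u0 \<in> carrier G"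
  defines "Y' \<equiv> \<phi> (inv u0) ` Y" and "H' \<equiv> (\<lambda>h. inv u0 \<otimes> h \<otimes> u0) ` H"
  shows "H' \<subseteq> carrier G" "\<forall>h\<in>H'. inv h \<in> H'" "\<forall>h\<in>H'. \<phi> h ` Y' \<subseteq> Y'"
    "quasi_convex \<Gamma> \<eta> Y'" "\<forall>y\<in>Y'. \<forall>y'\<in>Y'. \<exists>h\<in>H'. dist y (\<phi> h y') \<le> \<eta>"
proof -
  have sg: "subgroup H G" and HY: "\<forall>h\<in>H. \<phi> h ` Y \<subseteq> Y" and qc: "quasi_convex \<Gamma> \<eta> Y"
    and cob: "\<forall>y\<in>Y. \<forall>y'\<in>Y. \<exists>h\<in>H. dist y (\<phi> h y') \<le> \<eta>"
    using qcs unfolding quasi_convex_subgroup_def by auto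
  have HC: "H \<subseteq> carrier G" using sg subgroup.subset by blast
  have iu: "inv u0 \<in> carrier G" using u0 by simp
  show "H' \<subseteq> carrier G" unfolding H'_def using HC u0 by auto
  have act: "\<phi> (inv u0 \<otimes> h \<otimes> u0) x = \<phi> (inv u0) (\<phi> h (\<phi> u0 x))" if "h \<in> H" for h x
  proof -
    have hC: "h \<in> carrier G" using that HC by blast
    have "\<phi> (inv u0 \<otimes> h \<otimes> u0) x = \<phi> (inv u0 \<otimes> h) (\<phi> u0 x)" using hC u0 iu by (simp add: act_mult)
    also have "\<dots> = \<phi> (inv u0) (\<phi> h (\<phi> u0 x))" using hC iu by (simp add: act_mult)
    finally show ?thesis .
  qed
  show "\<forall>h\<in>H'. inv h \<in> H'"
  proof
    fix h' assume "h' \<in> H'"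
    then obtain h where h: "h \<in> H" "h' = inv u0 \<otimes> h \<otimes> u0" unfolding H'_def by blast
    have hC: "h \<in> carrier G" using h HC by blast
    have e1: "inv (inv u0 \<otimes> h \<otimes> u0) = inv u0 \<otimes> inv (inv u0 \<otimes> h)"
      using inv_mult_group[of "inv u0 \<otimes> h" u0] hC iu u0 by simp
    have e2: "inv (inv u0 \<otimes> h) = inv h \<otimes> u0" using inv_mult_group[of "inv u0" h] hC iu u0 by simp
    have e3: "inv u0 \<otimes> (inv h \<otimes> u0) = inv u0 \<otimes> inv h \<otimes> u0" using hC u0 by (simp add: m_assoc)
    have "inv h' = inv u0 \<otimes> inv h \<otimes> u0" by (simp only: h(2) e1 e2 e3)
    moreover have "inv h \<in> H" by (rule subgroup.m_inv_closed[OF sg h(1)])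
    ultimately show "inv h' \<in> H'" unfolding H'_def by blast
  qed
  show "\<forall>h\<in>H'. \<phi> h ` Y' \<subseteq> Y'"
  proof
    fix h' assume "h' \<in> H'"
    then obtain h where h: "h \<in> H" "h' = inv u0 \<otimes> h \<otimes> u0" unfolding H'_def by blast
    show "\<phi> h' ` Y' \<subseteq> Y'"
    proof
      fix z assume "z \<in> \<phi> h' ` Y'"
      then obtain y where y: "y \<in> Y" "z = \<phi> h' (\<phi> (inv u0) y)" unfolding Y'_def by blast
      have "z = \<phi> (inv u0) (\<phi> h y)" using y(2) act[OF h(1)] act_inv2[OF u0] h(2) by simp
      moreover have "\<phi> h y \<in> Y" using HY h(1) y(1) by blast
      ultimately show "z \<in> Y'" unfolding Y'_def by blast
    qed
  qed
  have isoi: "\<And>x y. dist (\<phi> (inv u0) x) (\<phi> (inv u0) y) = dist x y" using iso[OF iu] by blast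
  show "quasi_convex \<Gamma> \<eta> Y'"
    unfolding quasi_convex_def
  proof (intro ballI impI)
    fix p x y assume p: "p \<in> \<Gamma>" and xy: "x \<in> Y'" "y \<in> Y'" and j: "joins p x y"
    obtain a b \<alpha> where pe: "p = (a, b, \<alpha>)" by (cases p) auto
    have p2: "(a, b, \<phi> u0 \<circ> \<alpha>) \<in> \<Gamma>" using transl[OF p[unfolded pe] u0] .
    have xY: "\<phi> u0 x \<in> Y" "\<phi> u0 y \<in> Y" using xy act_inv2[OF u0] unfolding Y'_def by auto
    have "joins (a, b, \<phi> u0 \<circ> \<alpha>) (\<phi> u0 x) (\<phi> u0 y)" using j unfolding pe joins_def by simp
    then have sub1: "path_image_of (a, b, \<phi> u0 \<circ> \<alpha>) \<subseteq> nbhd Y \<eta>" using qc p2 xY unfolding quasi_convex_def by blast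
    show "path_image_of p \<subseteq> nbhd Y' \<eta>"
    proof
      fix z assume "z \<in> path_image_of p"
      then obtain t where t: "t \<in> {a..b}" "z = \<alpha> t" unfolding pe path_image_of_def by auto
      have "\<phi> u0 z \<in> nbhd Y \<eta>" using sub1 t unfolding path_image_of_def by auto
      then have n: "Y \<noteq> {}" "infdist (\<phi> u0 z) Y \<le> \<eta>" unfolding nbhd_def by auto
      have "infdist z Y' = infdist (\<phi> (inv u0) (\<phi> u0 z)) (\<phi> (inv u0) ` Y)"
        using act_inv1[OF u0] unfolding Y'_def by simp
      also have "\<dots> = infdist (\<phi> u0 z) Y" by (rule infdist_iso[OF isoi])
      finally show "z \<in> nbhd Y' \<eta>" using n unfolding nbhd_def Y'_def by auto
    qed
  qed
  show "\<forall>y\<in>Y'. \<forall>y'\<in>Y'. \<exists>h\<in>H'. dist y (\<phi> h y') \<le> \<eta>"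
  proof (intro ballI)
    fix y y' assume "y \<in> Y'" "y' \<in> Y'"
    then obtain a a' where a: "a \<in> Y" "a' \<in> Y" "y = \<phi> (inv u0) a" "y' = \<phi> (inv u0) a'" unfolding Y'_def by blast
    obtain h where h: "h \<in> H" "dist a (\<phi> h a') \<le> \<eta>" using cob a by blast
    have "\<phi> (inv u0 \<otimes> h \<otimes> u0) y' = \<phi> (inv u0) (\<phi> h a')" using act[OF h(1)] act_inv2[OF u0] a(4) by simp
    then have "dist y (\<phi> (inv u0 \<otimes> h \<otimes> u0) y') = dist a (\<phi> h a')" using a(3) isoi by simp
    then have "dist y (\<phi> (inv u0 \<otimes> h \<otimes> u0) y') \<le> \<eta>" using h(2) by simp
    moreover have "inv u0 \<otimes> h \<otimes> u0 \<in> H'" unfolding H'_def using h(1) by blast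
    ultimately show "\<exists>h\<in>H'. dist y (\<phi> h y') \<le> \<eta>" by blast
  qed
qed

lemma partI:
  assumes R: "coset_representatives G \<phi> A R" and eta: "\<eta> \<ge> 0"
    and qcs: "quasi_convex_subgroup G \<phi> \<Gamma> \<eta> H Y" and u: "u \<in> carrier G"
    and th: "\<theta> \<ge> Theta \<eta>" and big: "diam_proj G \<phi> A \<pi> R u Y > ereal \<theta>"
  shows "\<phi> u ` A \<subseteq> nbhd Y (C0 \<eta>)"
proof -
  obtain u0 where u0: "u0 \<in> R" "u0 \<in> carrier G" "\<phi> u0 ` A = \<phi> u ` A"
    "(THE u0. u0 \<in> R \<and> \<phi> u0 ` A = \<phi> u ` A) = u0" by (rule rep[OF R u])
  define Y' where "Y' = \<phi> (inv u0) ` Y"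
  define H' where "H' = (\<lambda>h. inv u0 \<otimes> h \<otimes> u0) ` H"
  note hyps = transl_core_hyps[OF qcs u0(2), folded Y'_def H'_def]
  have tm: "translated_map G \<phi> A \<pi> R u x = \<phi> u0 (\<pi> (\<phi> (inv u0) x))" for x
    unfolding translated_map_def Let_def u0(4) by simp
  have "ereal \<theta> < (SUP xy \<in> (translated_map G \<phi> A \<pi> R u ` Y) \<times> (translated_map G \<phi> A \<pi> R u ` Y).
      ereal (dist (fst xy) (snd xy)))" using big unfolding diam_proj_def ediam_def .
  then obtain xy where xy: "xy \<in> (translated_map G \<phi> A \<pi> R u ` Y) \<times> (translated_map G \<phi> A \<pi> R u ` Y)"
    "ereal \<theta> < ereal (dist (fst xy) (snd xy))" unfolding less_SUP_iff by blast
  then obtain x1 x2 where x: "x1 \<in> Y" "x2 \<in> Y" "fst xy = translated_map G \<phi> A \<pi> R u x1"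
    "snd xy = translated_map G \<phi> A \<pi> R u x2" by auto
  have "dist (fst xy) (snd xy) = dist (\<pi> (\<phi> (inv u0) x1)) (\<pi> (\<phi> (inv u0) x2))"
    using x(3,4) tm iso[OF u0(2)] by simp
  then have d: "dist (\<pi> (\<phi> (inv u0) x1)) (\<pi> (\<phi> (inv u0) x2)) > Theta \<eta>" using xy(2) th by simp
  have "A \<subseteq> nbhd Y' (C0 \<eta>)"
    by (rule core[OF eta hyps(1,2,3,4,5) _ _ d]) (use x in \<open>auto simp: Y'_def\<close>)
  show ?thesis
  proof
    fix z assume "z \<in> \<phi> u ` A"
    then obtain a where a: "a \<in> A" "z = \<phi> u0 a" using u0(3) by blast
    have n: "Y' \<noteq> {}" "infdist a Y' \<le> C0 \<eta>" using \<open>A \<subseteq> nbhd Y' (C0 \<eta>)\<close> a(1) unfolding nbhd_def by auto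
    have YY: "\<phi> u0 ` Y' = Y" unfolding Y'_def using act_inv2[OF u0(2)] by (simp add: image_image)
    have "infdist z Y = infdist (\<phi> u0 a) (\<phi> u0 ` Y')" using a(2) YY by simp
    also have "\<dots> = infdist a Y'" by (rule infdist_iso) (use iso[OF u0(2)] in blast)
    finally show "z \<in> nbhd Y (C0 \<eta>)" using n YY unfolding nbhd_def by auto
  qed
qed

end

context PS begin

lemma nbhd_mono: "r \<le> r' \<Longrightarrow> nbhd Y r \<subseteq> nbhd Y r'"
  unfolding nbhd_def by auto

lemma main:
  assumes R: "coset_representatives G \<phi> A R"
  shows "\<forall>\<eta>\<ge>0. \<exists>\<theta>\<ge>1. \<forall>H Y. quasi_convex_subgroup G \<phi> \<Gamma> \<eta> H Y \<longrightarrow>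
           (\<forall>u\<in>carrier G. diam_proj G \<phi> A \<pi> R u Y > ereal \<theta> \<longrightarrow> \<phi> u ` A \<subseteq> nbhd Y \<theta>) \<and>
           (\<forall>K. subgroup K G \<longrightarrow> H \<subseteq> K \<longrightarrow> subgroup_index G K H > enat (nat \<lfloor>\<theta>\<rfloor>) \<longrightarrow>
              (\<exists>k\<in>K. diam_proj G \<phi> A \<pi> R k Y \<le> ereal \<theta>))"
proof (intro allI impI)
  fix \<eta> :: real assume eta: "\<eta> \<ge> 0"
  define C7 where "C7 = 2 * C0 \<eta> + 2 + \<eta>"
  define F7 where "F7 = {f \<in> carrier G. dist a0 (\<phi> f a0) \<le> C7}"
  define M7 where "M7 = card F7"
  define \<theta> where "\<theta> = max (max 1 (C0 \<eta>)) (max (Theta \<eta>) (real M7))"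
  have th: "\<theta> \<ge> 1" "\<theta> \<ge> C0 \<eta>" "\<theta> \<ge> Theta \<eta>" "\<theta> \<ge> real M7" unfolding \<theta>_def by auto
  have F7fin: "finite F7" unfolding F7_def by (rule proper)
  have M7le: "M7 \<le> nat \<lfloor>\<theta>\<rfloor>"
  proof -
    have "int M7 \<le> \<lfloor>\<theta>\<rfloor>" using th(4) by (simp add: le_floor_iff)
    then show ?thesis by simp
  qed
  show "\<exists>\<theta>\<ge>1. \<forall>H Y. quasi_convex_subgroup G \<phi> \<Gamma> \<eta> H Y \<longrightarrow>
           (\<forall>u\<in>carrier G. diam_proj G \<phi> A \<pi> R u Y > ereal \<theta> \<longrightarrow> \<phi> u ` A \<subseteq> nbhd Y \<theta>) \<and>
           (\<forall>K. subgroup K G \<longrightarrow> H \<subseteq> K \<longrightarrow> subgroup_index G K H > enat (nat \<lfloor>\<theta>\<rfloor>) \<longrightarrow>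
              (\<exists>k\<in>K. diam_proj G \<phi> A \<pi> R k Y \<le> ereal \<theta>))"
  proof (intro exI[of _ \<theta>] conjI allI impI ballI th(1))
    fix H Y u
    assume qcs: "quasi_convex_subgroup G \<phi> \<Gamma> \<eta> H Y" and u: "u \<in> carrier G"
      and big: "diam_proj G \<phi> A \<pi> R u Y > ereal \<theta>"
    have "\<phi> u ` A \<subseteq> nbhd Y (C0 \<eta>)" by (rule partI[OF R eta qcs u th(3) big])
    then show "\<phi> u ` A \<subseteq> nbhd Y \<theta>" using nbhd_mono[OF th(2)] by blast
  next
    fix H Y K
    assume qcs: "quasi_convex_subgroup G \<phi> \<Gamma> \<eta> H Y" and K: "subgroup K G" and HK: "H \<subseteq> K"
      and idx: "subgroup_index G K H > enat (nat \<lfloor>\<theta>\<rfloor>)"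
    have sg: "subgroup H G" and cob: "\<forall>y\<in>Y. \<forall>y'\<in>Y. \<exists>h\<in>H. dist y (\<phi> h y') \<le> \<eta>"
      using qcs unfolding quasi_convex_subgroup_def by auto
    have HC: "H \<subseteq> carrier G" using sg subgroup.subset by blast
    have KC: "K \<subseteq> carrier G" using K subgroup.subset by blast
    show "\<exists>k\<in>K. diam_proj G \<phi> A \<pi> R k Y \<le> ereal \<theta>"
    proof (rule ccontr)
      assume "\<not> ?thesis"
      then have allbig: "\<forall>k\<in>K. diam_proj G \<phi> A \<pi> R k Y > ereal \<theta>" by (simp add: not_le)
      have near: "k \<in> K \<Longrightarrow> \<phi> k ` A \<subseteq> nbhd Y (C0 \<eta>)" for k
        using partI[OF R eta qcs _ th(3)] allbig KC by blast
      have oneK: "\<one> \<in> K" using K subgroup.one_closed by blast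
      have "\<phi> \<one> a0 \<in> nbhd Y (C0 \<eta>)" using near[OF oneK] a0A by blast
      then have "a0 \<in> nbhd Y (C0 \<eta>)" using act_one by simp
      then have Yne: "Y \<noteq> {}" and "infdist a0 Y < C0 \<eta> + 1" unfolding nbhd_def by auto
      then obtain y0 where y0: "y0 \<in> Y" "dist a0 y0 < C0 \<eta> + 1" using infdist_lessE by blast
      have cos: "k \<in> K \<Longrightarrow> \<exists>f\<in>F7. H #> k = H #> f" for k
      proof -
        assume k: "k \<in> K"
        have kC: "k \<in> carrier G" using k KC by blast
        have "\<phi> k a0 \<in> nbhd Y (C0 \<eta>)" using near[OF k] a0A by blast
        then have "infdist (\<phi> k a0) Y < C0 \<eta> + 1" unfolding nbhd_def by auto
        then obtain y where y: "y \<in> Y" "dist (\<phi> k a0) y < C0 \<eta> + 1" using infdist_lessE[OF Yne] by blast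
        obtain h where h: "h \<in> H" "dist y (\<phi> h y0) \<le> \<eta>" using cob y(1) y0(1) by blast
        have hC: "h \<in> carrier G" using h HC by blast
        define f where "f = inv h \<otimes> k"
        have fC: "f \<in> carrier G" unfolding f_def using hC kC by simp
        have "\<phi> f a0 = \<phi> (inv h) (\<phi> k a0)" unfolding f_def using hC kC by (simp add: act_mult)
        then have "dist a0 (\<phi> f a0) \<le> dist a0 y0 + dist y0 (\<phi> (inv h) (\<phi> k a0))"
          using dist_triangle[of a0 "\<phi> f a0" y0] by simp
        also have "dist y0 (\<phi> (inv h) (\<phi> k a0)) = dist (\<phi> h y0) (\<phi> k a0)"
          using iso[OF hC, of y0 "\<phi> (inv h) (\<phi> k a0)"] act_inv2[OF hC] by simp
        also have "\<dots> \<le> dist (\<phi> h y0) y + dist y (\<phi> k a0)" by (rule dist_triangle)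
        finally have "dist a0 (\<phi> f a0) \<le> C7" using y0(2) h(2) y(2) unfolding C7_def
          by (simp add: dist_commute)
        then have "f \<in> F7" unfolding F7_def using fC by simp
        moreover have "H #> f = H #> k"
        proof -
          have i1: "inv h \<in> carrier G" using hC by simp
          have e: "(H #> inv h) #> k = H #> (inv h \<otimes> k)" by (rule coset_mult_assoc[OF HC i1 kC])
          have e2: "H #> inv h = H" by (rule subgroup.rcos_const[OF sg grp subgroup.m_inv_closed[OF sg h(1)]])
          show ?thesis unfolding f_def using e e2 by metis
        qed
        ultimately show ?thesis by metis
      qed
      define C where "C = {r_coset G H k | k. k \<in> K}"
      have CF: "C \<subseteq> (\<lambda>f. H #> f) ` F7" unfolding C_def using cos by blast
      have Cfin: "finite C" using CF F7fin finite_surj by blast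
      have "card C \<le> card ((\<lambda>f. H #> f) ` F7)" using CF F7fin by (intro card_mono) auto
      also have "\<dots> \<le> card F7" using F7fin by (rule card_image_le)
      finally have "card C \<le> nat \<lfloor>\<theta>\<rfloor>" using M7le unfolding M7_def by linarith
      then have "subgroup_index G K H \<le> enat (nat \<lfloor>\<theta>\<rfloor>)"
        unfolding subgroup_index_def Let_def C_def[symmetric] using Cfin by simp
      then show False using idx by simp
    qed
  qed
qed

end

theorem mainTheorem14:
  fixes G :: "('g, 'b) monoid_scheme" and \<phi> :: "'g \<Rightarrow> 'x::metric_space \<Rightarrow> 'x"
    and \<Gamma> :: "'x path set" and \<mu> \<nu> \<delta> :: real
    and g :: 'g and A :: "'x set" and \<pi>A :: "'x \<Rightarrow> 'x" and R :: "'g set"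
  assumes "path_system_group G \<phi> \<Gamma> \<mu> \<nu>"
    and "constricting_element G \<phi> \<Gamma> \<delta> g A \<pi>A"
    and "coset_representatives G \<phi> A R"
  shows "\<forall>\<eta>\<ge>0. \<exists>\<theta>\<ge>1. \<forall>H Y. quasi_convex_subgroup G \<phi> \<Gamma> \<eta> H Y \<longrightarrow>
           (\<forall>u\<in>carrier G. diam_proj G \<phi> A \<pi>A R u Y > ereal \<theta> \<longrightarrow> \<phi> u ` A \<subseteq> nbhd Y \<theta>) \<and>
           (\<forall>K. subgroup K G \<longrightarrow> H \<subseteq> K \<longrightarrow> subgroup_index G K H > enat (nat \<lfloor>\<theta>\<rfloor>) \<longrightarrow>
              (\<exists>k\<in>K. diam_proj G \<phi> A \<pi>A R k Y \<le> ereal \<theta>))"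
proof -
  interpret PS G \<phi> \<Gamma> \<mu> \<nu> \<delta> g A \<pi>A using assms(1,2) by unfold_locales
  show ?thesis by (rule main[OF assms(3)])
qed


end
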